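(* Let $(G,\precsim)$ be a compatible quasi-ordered abelian group such that $G^o$ is a direct summand of $G$ with complement $F$. Then $(F,\precsim|_F)$ is canonically isomorphic (via $f\mapsto f+G^o$) to the valued part $(G/G^o,\precsim)$ of $(G,\precsim)$, and the map $G^o\times F\to G$, $(a,f)\mapsto a+f$, is an isomorphism of quasi-ordered groups from $(G^o,\precsim|_{G^o})\boxtimes(F,\precsim|_F)$ onto $(G,\precsim)$.
   Context: A compatible quasi-ordered abelian group is an abelian group $G$ with a total quasi-order $\precsim$ (reflexive, transitive, any two elements comparable) such that, writing $a\sim b$ for $a\precsim b\wedge b\precsim a$: $(Q_1)$ $x\sim0\Rightarrow x=0$; $(Q_2)$ $x\precsim y\wedge y\not\sim z\Rightarrow x+z\precsim y+z$, for all $x,y,z$. With $cl(g)$ the $\sim$-class of $g$, $g$ is o-type if $cl(g)=\{g\}$ and $g$ is not of order $2$; $G^o$, the set of o-type elements, is a subgroup on which $\precsim$ is a group order. The valued part of $G$ is $G/G^o$ with the (valuational) quasi-order $g+G^o\precsim h+G^o\Leftrightarrow g-h\in G^o\vee(g-h\notin G^o\wedge g\precsim h)$. For an ordered abelian group $(A,\le)$ and an abelian group $F$ with a valuational quasi-order $\precsim_F$ (one of the form $a\precsim_F b\Leftrightarrow w(b)\le w(a)$ for a valuation $w$), the compatible product $(A,\le)\boxtimes(F,\precsim_F)$ is the group $A\times F$ with the quasi-order $(a,f)\precsim(a',f')\Leftrightarrow(f=f'=0\wedge a\le a')\vee(f'\neq0\wedge f\precsim_F f')$. An isomorphism of quasi-ordered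 groups is a group isomorphism $\phi$ with $x\precsim y\Leftrightarrow\phi(x)\precsim\phi(y)$. *)

theory Defs
  imports "HOL-Algebra.Algebra"
begin

text \<open>Abelian groups are written multiplicatively (HOL-Algebra convention):
  the group operation is \<open>\<otimes>\<close>, the neutral element \<open>\<one>\<close>.\<close>

definition qequiv :: "('a \<Rightarrow> 'a \<Rightarrow> bool) \<Rightarrow> 'a \<Rightarrow> 'a \<Rightarrow> bool" where
  "qequiv qo x y \<longleftrightarrow> qo x y \<and> qo y x"

text \<open>Compatible quasi-ordered abelian group: total quasi-order plus (Q1), (Q2).\<close>
definition cqo_group :: "('a, 'b) monoid_scheme \<Rightarrow> ('a \<Rightarrow> 'a \<Rightarrow> bool) \<Rightarrow> bool" where
  "cqo_group G qo \<longleftrightarrow> comm_group G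
     \<and> (\<forall>x\<in>carrier G. qo x x)
     \<and> (\<forall>x\<in>carrier G. \<forall>y\<in>carrier G. \<forall>z\<in>carrier G. qo x y \<and> qo y z \<longrightarrow> qo x z)
     \<and> (\<forall>x\<in>carrier G. \<forall>y\<in>carrier G. qo x y \<or> qo y x)
     \<and> (\<forall>x\<in>carrier G. qequiv qo x \<one>\<^bsub>G\<^esub> \<longrightarrow> x = \<one>\<^bsub>G\<^esub>)
     \<and> (\<forall>x\<in>carrier G. \<forall>y\<in>carrier G. \<forall>z\<in>carrier G.
          qo x y \<and> \<not> qequiv qo y z \<longrightarrow> qo (x \<otimes>\<^bsub>G\<^esub> z) (y \<otimes>\<^bsub>G\<^esub> z))"

definition qclass :: "('a, 'b) monoid_scheme \<Rightarrow> ('a \<Rightarrow> 'a \<Rightarrow> bool) \<Rightarrow> 'a \<Rightarrow> 'a set" where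
  "qclass G qo g = {h \<in> carrier G. qequiv qo h g}"

definition otype_part :: "('a, 'b) monoid_scheme \<Rightarrow> ('a \<Rightarrow> 'a \<Rightarrow> bool) \<Rightarrow> 'a set" where
  "otype_part G qo = {g \<in> carrier G. qclass G qo g = {g}
      \<and> \<not> (g \<noteq> \<one>\<^bsub>G\<^esub> \<and> g \<otimes>\<^bsub>G\<^esub> g = \<one>\<^bsub>G\<^esub>)}"

definition valued_le :: "('a, 'b) monoid_scheme \<Rightarrow> ('a \<Rightarrow> 'a \<Rightarrow> bool) \<Rightarrow> 'a set \<Rightarrow> 'a set \<Rightarrow> bool" where
  "valued_le G qo C D \<longleftrightarrow> (\<exists>g\<in>carrier G. \<exists>h\<in>carrier G.
      C = otype_part G qo #>\<^bsub>G\<^esub> g \<and> D = otype_part G qo #>\<^bsub>G\<^esub> h \<and>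
      (g \<otimes>\<^bsub>G\<^esub> inv\<^bsub>G\<^esub> h \<in> otype_part G qo \<or>
       (g \<otimes>\<^bsub>G\<^esub> inv\<^bsub>G\<^esub> h \<notin> otype_part G qo \<and> qo g h)))"

definition direct_summand_compl :: "('a, 'b) monoid_scheme \<Rightarrow> 'a set \<Rightarrow> 'a set \<Rightarrow> bool" where
  "direct_summand_compl G H F \<longleftrightarrow> subgroup H G \<and> subgroup F G \<and>
      H \<inter> F = {\<one>\<^bsub>G\<^esub>} \<and> H <#>\<^bsub>G\<^esub> F = carrier G"

definition compat_prod_le :: "('c, 'd) monoid_scheme \<Rightarrow> ('a \<Rightarrow> 'a \<Rightarrow> bool) \<Rightarrow> ('c \<Rightarrow> 'c \<Rightarrow> bool)
    \<Rightarrow> ('a \<times> 'c) \<Rightarrow> ('a \<times> 'c) \<Rightarrow> bool" where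
  "compat_prod_le F qoA qoF p q \<longleftrightarrow>
     (snd p = \<one>\<^bsub>F\<^esub> \<and> snd q = \<one>\<^bsub>F\<^esub> \<and> qoA (fst p) (fst q)) \<or>
     (snd q \<noteq> \<one>\<^bsub>F\<^esub> \<and> qoF (snd p) (snd q))"

definition qo_iso :: "('a, 'b) monoid_scheme \<Rightarrow> ('a \<Rightarrow> 'a \<Rightarrow> bool) \<Rightarrow> ('c, 'd) monoid_scheme
    \<Rightarrow> ('c \<Rightarrow> 'c \<Rightarrow> bool) \<Rightarrow> ('a \<Rightarrow> 'c) \<Rightarrow> bool" where
  "qo_iso G qoG H qoH \<phi> \<longleftrightarrow> \<phi> \<in> iso G H \<and>
     (\<forall>x\<in>carrier G. \<forall>y\<in>carrier G. qoG x y \<longleftrightarrow> qoH (\<phi> x) (\<phi> y))"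

end

theory Submission
  imports Defs
begin

locale cqoS =
  fixes G :: "('a, 'b) monoid_scheme" (structure) and qo :: "'a \<Rightarrow> 'a \<Rightarrow> bool"
  assumes cq: "cqo_group G qo"
    and sg: "subgroup (otype_part G qo) G"
begin

abbreviation "GO \<equiv> otype_part G qo"

lemma cg: "comm_group G" using cq unfolding cqo_group_def by blast

sublocale comm_group G by (rule cg)

lemma refl: "x \<in> carrier G \<Longrightarrow> qo x x" using cq unfolding cqo_group_def by blast
lemma trans: "x \<in> carrier G \<Longrightarrow> y \<in> carrier G \<Longrightarrow> z \<in> carrier G \<Longrightarrow> qo x y \<Longrightarrow> qo y z \<Longrightarrow> qo x z"
  using cq unfolding cqo_group_def by blast
lemma total: "x \<in> carrier G \<Longrightarrow> y \<in> carrier G \<Longrightarrow> qo x y \<or> qo y x"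
  using cq unfolding cqo_group_def by blast
lemma Q1: "x \<in> carrier G \<Longrightarrow> qo x \<one> \<Longrightarrow> qo \<one> x \<Longrightarrow> x = \<one>"
  using cq unfolding cqo_group_def qequiv_def by blast
lemma Q2: "x \<in> carrier G \<Longrightarrow> y \<in> carrier G \<Longrightarrow> z \<in> carrier G \<Longrightarrow> qo x y \<Longrightarrow> \<not> (qo y z \<and> qo z y)
   \<Longrightarrow> qo (x \<otimes> z) (y \<otimes> z)"
  using cq unfolding cqo_group_def qequiv_def by blast

lemma O_carr: "a \<in> GO \<Longrightarrow> a \<in> carrier G"
  unfolding otype_part_def by blast

lemma O_single: "a \<in> GO \<Longrightarrow> x \<in> carrier G \<Longrightarrow> qo x a \<Longrightarrow> qo a x \<Longrightarrow> x = a"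
  unfolding otype_part_def qclass_def qequiv_def by blast

lemma notO_cases:
  assumes "v \<in> carrier G" "v \<notin> GO"
  shows "(\<exists>u\<in>carrier G. u \<noteq> v \<and> qo u v \<and> qo v u) \<or> (v \<noteq> \<one> \<and> v \<otimes> v = \<one>)"
proof -
  have "v \<in> qclass G qo v" using assms refl unfolding qclass_def qequiv_def by blast
  thus ?thesis using assms unfolding otype_part_def qclass_def qequiv_def by blast
qed

lemma O_one: "\<one> \<in> GO" using sg subgroup.one_closed by fastforce
lemma O_inv: "a \<in> GO \<Longrightarrow> inv a \<in> GO" using sg subgroup.m_inv_closed by fastforce
lemma O_mult: "a \<in> GO \<Longrightarrow> b \<in> GO \<Longrightarrow> a \<otimes> b \<in> GO" using sg subgroup.m_closed by fastforce

lemma notO_mult: "v \<in> carrier G \<Longrightarrow> v \<notin> GO \<Longrightarrow> a \<in> GO \<Longrightarrow> v \<otimes> a \<notin> GO"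
proof
  assume a: "v \<in> carrier G" "v \<notin> GO" "a \<in> GO" "v \<otimes> a \<in> GO"
  hence "(v \<otimes> a) \<otimes> inv a \<in> GO" using O_mult O_inv by blast
  thus False using a O_carr by (simp add: m_assoc)
qed

lemma notO_inv: "v \<in> carrier G \<Longrightarrow> v \<notin> GO \<Longrightarrow> inv v \<notin> GO"
  using O_inv by fastforce

lemma lemN:
  assumes v: "v \<in> carrier G" "v \<notin> GO"
  shows "qo (inv v) v \<and> qo v (inv v)"
  using notO_cases[OF v]
proof
  assume "\<exists>u\<in>carrier G. u \<noteq> v \<and> qo u v \<and> qo v u"
  then obtain u where u: "u \<in> carrier G" "u \<noteq> v" "qo u v" "qo v u" by blast
  have iv: "inv v \<in> carrier G" using v by simp
  show ?thesis
  proof (rule ccontr)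
    assume n: "\<not> ?thesis"
    have n2: "\<not> (qo u (inv v) \<and> qo (inv v) u)"
    proof
      assume h: "qo u (inv v) \<and> qo (inv v) u"
      have "qo (inv v) v" using trans[OF iv u(1) v(1)] h u(3) by blast
      moreover have "qo v (inv v)" using trans[OF v(1) u(1) iv] h u(4) by blast
      ultimately show False using n by blast
    qed
    have n1: "\<not> (qo v (inv v) \<and> qo (inv v) v)" using n by blast
    have "qo (u \<otimes> inv v) (v \<otimes> inv v)" using Q2[OF u(1) v(1) iv u(3) n1] .
    moreover have "qo (v \<otimes> inv v) (u \<otimes> inv v)" using Q2[OF v(1) u(1) iv u(4) n2] .
    ultimately have "qo (u \<otimes> inv v) \<one>" "qo \<one> (u \<otimes> inv v)" using v by simp_all
    hence "u \<otimes> inv v = \<one>" using Q1 u(1) iv by blast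
    hence "inv (inv v) = u" using inv_equality u(1) iv by blast
    hence "u = v" using v by simp
    thus False using u by simp
  qed
next
  assume "v \<noteq> \<one> \<and> v \<otimes> v = \<one>"
  hence "inv v = v" using v inv_equality by blast
  thus ?thesis using refl v by simp
qed

lemma notO_neq: "a \<in> GO \<Longrightarrow> v \<in> carrier G \<Longrightarrow> v \<notin> GO \<Longrightarrow> \<not> (qo v a \<and> qo a v)"
  using O_single by blast

lemma notO_neq': "a \<in> GO \<Longrightarrow> v \<in> carrier G \<Longrightarrow> v \<notin> GO \<Longrightarrow> \<not> (qo a v \<and> qo v a)"
  using O_single by blast

lemma F2one: assumes w: "w \<in> carrier G" "w \<notin> GO" shows "\<not> qo w \<one>"
proof
  assume h: "qo w \<one>"
  have nw: "\<not> qo \<one> w" using notO_neq[OF O_one w] h by blast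
  have "\<not> (qo \<one> (inv w) \<and> qo (inv w) \<one>)"
    using notO_neq'[OF O_one, of "inv w"] w notO_inv by auto
  hence "qo (w \<otimes> inv w) (\<one> \<otimes> inv w)" using Q2[of w \<one> "inv w"] h w by auto
  hence "qo \<one> (inv w)" using w by simp
  hence "qo \<one> w" using lemN[OF w] trans[of \<one> "inv w" w] w by auto
  thus False using nw by simp
qed

lemma F2: assumes a: "a \<in> GO" and v: "v \<in> carrier G" "v \<notin> GO" shows "\<not> qo v a"
proof
  assume h: "qo v a"
  have ac: "a \<in> carrier G" using a O_carr by blast
  show False
  proof (cases "a = \<one>")
    case True thus False using F2one[OF v] h by simp
  next
    case False
    have "\<not> (qo a (inv a) \<and> qo (inv a) a)"
    proof
      assume "qo a (inv a) \<and> qo (inv a) a"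
      hence "inv a = a" using O_single[OF a, of "inv a"] ac by auto
      hence "a \<otimes> a = \<one>" using ac by (metis r_inv)
      thus False using a False unfolding otype_part_def by blast
    qed
    hence "qo (v \<otimes> inv a) (a \<otimes> inv a)" using Q2[of v a "inv a"] h v ac by auto
    hence "qo (v \<otimes> inv a) \<one>" using ac by simp
    moreover have "v \<otimes> inv a \<notin> GO" using notO_mult[OF v O_inv[OF a]] .
    ultimately show False using F2one v ac by simp
  qed
qed

lemma F1: assumes a: "a \<in> GO" and v: "v \<in> carrier G" "v \<notin> GO" shows "qo v (v \<otimes> a)"
proof (rule ccontr)
  assume n: "\<not> qo v (v \<otimes> a)"
  have ac: "a \<in> carrier G" using a O_carr by blast
  have va: "v \<otimes> a \<in> carrier G" "v \<otimes> a \<notin> GO" using v ac notO_mult[OF v a] by auto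
  have vb: "v \<otimes> inv a \<in> carrier G" "v \<otimes> inv a \<notin> GO" using v ac notO_mult[OF v O_inv[OF a]] by auto
  have e: "inv (v \<otimes> inv a) = inv v \<otimes> a" using v ac by (simp add: inv_mult m_comm)
  have N2: "qo (inv v \<otimes> a) (v \<otimes> inv a) \<and> qo (v \<otimes> inv a) (inv v \<otimes> a)"
    using lemN[OF vb] e by simp
  have ni: "\<not> (qo v a \<and> qo a v)" "\<not> (qo (inv v) a \<and> qo a (inv v))"
    using notO_neq[OF a] v notO_inv by auto
  have "qo (inv v \<otimes> a) (v \<otimes> a)" using Q2[of "inv v" v a] lemN[OF v] ni v ac by auto
  hence c1: "qo (v \<otimes> inv a) (v \<otimes> a)" using N2 trans[of "v \<otimes> inv a" "inv v \<otimes> a" "v \<otimes> a"] v ac by auto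
  have "qo (v \<otimes> a) v" using total[of v "v \<otimes> a"] n va v by auto
  moreover have "\<not> (qo v (inv a) \<and> qo (inv a) v)" using notO_neq[OF O_inv[OF a]] v by auto
  ultimately have "qo ((v \<otimes> a) \<otimes> inv a) (v \<otimes> inv a)" using Q2[of "v \<otimes> a" v "inv a"] v ac by auto
  hence "qo v (v \<otimes> inv a)" using v ac by (simp add: m_assoc)
  hence "qo v (v \<otimes> a)" using c1 trans[of v "v \<otimes> inv a" "v \<otimes> a"] v ac by auto
  thus False using n by simp
qed

lemma shift: assumes a: "a \<in> GO" and v: "v \<in> carrier G" "v \<notin> GO"
  shows "qo (a \<otimes> v) v \<and> qo v (a \<otimes> v)"
proof -
  have ac: "a \<in> carrier G" using a O_carr by blast
  have "qo v (v \<otimes> a)" using F1[OF a v] .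
  moreover have "qo (v \<otimes> a) ((v \<otimes> a) \<otimes> inv a)"
    using F1[OF O_inv[OF a]] v ac notO_mult[OF v a] by auto
  moreover have "(v \<otimes> a) \<otimes> inv a = v" using v ac by (simp add: m_assoc)
  moreover have "v \<otimes> a = a \<otimes> v" using v ac m_comm by blast
  ultimately show ?thesis by simp
qed


context
  fixes F :: "'a set"
  assumes dsc: "direct_summand_compl G GO F"
begin

lemma sgF: "subgroup F G" using dsc unfolding direct_summand_compl_def by blast
lemma capF: "GO \<inter> F = {\<one>}" using dsc unfolding direct_summand_compl_def by blast
lemma sumF: "GO <#> F = carrier G" using dsc unfolding direct_summand_compl_def by blast

lemma F_carr: "f \<in> F \<Longrightarrow> f \<in> carrier G" using sgF subgroup.subset by blast
lemma F_inv: "f \<in> F \<Longrightarrow> inv f \<in> F" using sgF subgroup.m_inv_closed by fastforce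
lemma F_mult: "f \<in> F \<Longrightarrow> g \<in> F \<Longrightarrow> f \<otimes> g \<in> F" using sgF subgroup.m_closed by fastforce
lemma F_one: "\<one> \<in> F" using sgF subgroup.one_closed by fastforce

lemma FnotO: "f \<in> F \<Longrightarrow> f \<noteq> \<one> \<Longrightarrow> f \<notin> GO" using capF by blast

lemma coset_eq: assumes "x \<in> carrier G" "y \<in> carrier G"
  shows "(GO #> x = GO #> y) \<longleftrightarrow> x \<otimes> inv y \<in> GO"
proof
  assume h: "GO #> x = GO #> y"
  have "x \<in> GO #> y" using rcos_self[OF assms(1) sg] h by simp
  thus "x \<otimes> inv y \<in> GO" using subgroup.rcos_module_imp[OF sg is_group assms(2)] by blast
next
  assume "x \<otimes> inv y \<in> GO"
  hence "x \<in> GO #> y" using subgroup.rcos_module_rev[OF sg is_group assms(2) assms(1)] by blast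
  thus "GO #> x = GO #> y" using repr_independence[OF _ assms(2) sg] by simp
qed

lemma decomp: "x \<in> carrier G \<Longrightarrow> \<exists>a\<in>GO. \<exists>f\<in>F. x = a \<otimes> f"
  using sumF unfolding set_mult_def by blast

lemma in_coset: assumes "g \<in> carrier G" "f \<in> carrier G" "GO #> f = GO #> g"
  shows "\<exists>a\<in>GO. g = a \<otimes> f"
proof -
  have "g \<in> GO #> f" using rcos_self[OF assms(1) sg] assms(3) by simp
  thus ?thesis unfolding r_coset_def by blast
qed

lemma FO_eq: "f \<in> F \<Longrightarrow> g \<in> F \<Longrightarrow> f \<otimes> inv g \<in> GO \<Longrightarrow> f = g"
proof -
  assume a: "f \<in> F" "g \<in> F" "f \<otimes> inv g \<in> GO"
  have "f \<otimes> inv g \<in> F" using a F_mult F_inv by blast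
  hence "f \<otimes> inv g = \<one>" using a capF by blast
  hence "inv (inv g) = f" using inv_equality a F_carr by blast
  thus "f = g" using a F_carr by simp
qed

lemma part1_order: assumes f: "f \<in> F" and g: "g \<in> F"
  shows "qo f g \<longleftrightarrow> valued_le G qo (GO #> f) (GO #> g)"
proof
  assume "qo f g"
  thus "valued_le G qo (GO #> f) (GO #> g)" unfolding valued_le_def using f g F_carr by blast
next
  assume "valued_le G qo (GO #> f) (GO #> g)"
  then obtain g' h' where gh: "g' \<in> carrier G" "h' \<in> carrier G" "GO #> f = GO #> g'" "GO #> g = GO #> h'"
    "g' \<otimes> inv h' \<in> GO \<or> (g' \<otimes> inv h' \<notin> GO \<and> qo g' h')"
    unfolding valued_le_def by blast
  have fc: "f \<in> carrier G" and gc: "g \<in> carrier G" using f g F_carr by auto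
  obtain a where a: "a \<in> GO" "g' = a \<otimes> f" using in_coset[OF gh(1) fc gh(3)] by blast
  obtain b where b: "b \<in> GO" "h' = b \<otimes> g" using in_coset[OF gh(2) gc gh(4)] by blast
  show "qo f g"
  proof (cases "g' \<otimes> inv h' \<in> GO")
    case True
    hence "GO #> g' = GO #> h'" using coset_eq gh by blast
    hence "GO #> f = GO #> g" using gh by simp
    hence "f = g" using coset_eq fc gc FO_eq f g by blast
    thus ?thesis using refl fc by simp
  next
    case False
    hence q: "qo g' h'" using gh by blast
    show ?thesis
    proof (cases "g = \<one>")
      case True
      hence h'O: "h' \<in> GO" using b by (simp add: O_carr)
      show ?thesis
      proof (cases "f = \<one>")
        case True thus ?thesis using \<open>g = \<one>\<close> refl by simp
      next
        case False
        hence "f \<notin> GO" using FnotO f by blast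
        hence "f \<otimes> a \<notin> GO" using notO_mult[OF fc _ a(1)] by blast
        moreover have "g' = f \<otimes> a" using a m_comm[OF O_carr[OF a(1)] fc] by simp
        ultimately have "g' \<notin> GO" by simp
        thus ?thesis using F2[OF h'O gh(1)] q by blast
      qed
    next
      case False
      hence gO: "g \<notin> GO" using FnotO g by blast
      have hg: "qo h' g" using shift[OF b(1) gc gO] b by simp
      show ?thesis
      proof (cases "f = \<one>")
        case True
        have "\<not> qo g \<one>" using F2[OF O_one gc gO] .
        thus ?thesis using total[OF gc] True by auto
      next
        case False
        hence fO: "f \<notin> GO" using FnotO f by blast
        have "qo f g'" using shift[OF a(1) fc fO] a by simp
        thus ?thesis using trans[OF fc gh(1) gh(2)] trans[OF fc gh(2) gc] q hg by blast
      qed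
    qed
  qed
qed

lemma nGO: "GO \<lhd> G" using subgroup_imp_normal[OF sg] .

lemma part1: "qo_iso (G\<lparr>carrier := F\<rparr>) qo (G Mod GO) (valued_le G qo) (\<lambda>f. GO #> f)"
  unfolding qo_iso_def iso_def
proof (intro conjI CollectI ballI)
  show "(\<lambda>f. GO #> f) \<in> hom (G\<lparr>carrier := F\<rparr>) (G Mod GO)"
    unfolding hom_def
  proof (intro CollectI conjI ballI Pi_I)
    fix f assume "f \<in> carrier (G\<lparr>carrier := F\<rparr>)"
    hence "f \<in> carrier G" using F_carr by simp
    thus "GO #> f \<in> carrier (G Mod GO)" unfolding carrier_FactGroup by blast
  next
    fix f g assume "f \<in> carrier (G\<lparr>carrier := F\<rparr>)" "g \<in> carrier (G\<lparr>carrier := F\<rparr>)"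
    hence "f \<in> carrier G" "g \<in> carrier G" using F_carr by auto
    thus "GO #> (f \<otimes>\<^bsub>G\<lparr>carrier := F\<rparr>\<^esub> g) = (GO #> f) \<otimes>\<^bsub>G Mod GO\<^esub> (GO #> g)"
      using normal.rcos_sum[OF nGO] by simp
  qed
next
  show "bij_betw (\<lambda>f. GO #> f) (carrier (G\<lparr>carrier := F\<rparr>)) (carrier (G Mod GO))"
    unfolding bij_betw_def
  proof
    show "inj_on (\<lambda>f. GO #> f) (carrier (G\<lparr>carrier := F\<rparr>))"
    proof (rule inj_onI)
      fix f g assume "f \<in> carrier (G\<lparr>carrier := F\<rparr>)" "g \<in> carrier (G\<lparr>carrier := F\<rparr>)" "GO #> f = GO #> g"
      thus "f = g" using coset_eq F_carr FO_eq by auto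
    qed
  next
    show "(\<lambda>f. GO #> f) ` carrier (G\<lparr>carrier := F\<rparr>) = carrier (G Mod GO)"
    proof
      show "(\<lambda>f. GO #> f) ` carrier (G\<lparr>carrier := F\<rparr>) \<subseteq> carrier (G Mod GO)"
        unfolding carrier_FactGroup using F_carr by auto
    next
      show "carrier (G Mod GO) \<subseteq> (\<lambda>f. GO #> f) ` carrier (G\<lparr>carrier := F\<rparr>)"
      proof
        fix C assume "C \<in> carrier (G Mod GO)"
        then obtain x where x: "x \<in> carrier G" "C = GO #> x" unfolding carrier_FactGroup by blast
        obtain a f where af: "a \<in> GO" "f \<in> F" "x = a \<otimes> f" using decomp[OF x(1)] by blast
        have ac: "a \<in> carrier G" and fc: "f \<in> carrier G" using af O_carr F_carr by auto
        have "x \<otimes> inv f = a" using af ac fc by (simp add: m_assoc)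
        hence "GO #> x = GO #> f" using coset_eq x(1) fc af(1) by simp
        thus "C \<in> (\<lambda>f. GO #> f) ` carrier (G\<lparr>carrier := F\<rparr>)" using x af by auto
      qed
    qed
  qed
next
  fix x y assume "x \<in> carrier (G\<lparr>carrier := F\<rparr>)" "y \<in> carrier (G\<lparr>carrier := F\<rparr>)"
  thus "qo x y = valued_le G qo (GO #> x) (GO #> y)" using part1_order by simp
qed

lemma prod_notO: assumes "a \<in> GO" "f \<in> F" "f \<noteq> \<one>"
  shows "a \<otimes> f \<notin> GO" "qo (a \<otimes> f) f" "qo f (a \<otimes> f)"
proof -
  have fc: "f \<in> carrier G" using assms F_carr by blast
  have fO: "f \<notin> GO" using FnotO assms by blast
  have "f \<otimes> a \<notin> GO" using notO_mult[OF fc fO assms(1)] .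
  moreover have "f \<otimes> a = a \<otimes> f" using m_comm[OF fc O_carr[OF assms(1)]] .
  ultimately show "a \<otimes> f \<notin> GO" by simp
  show "qo (a \<otimes> f) f" "qo f (a \<otimes> f)" using shift[OF assms(1) fc fO] by auto
qed

lemma part2_order: assumes a: "a \<in> GO" "a' \<in> GO" and f: "f \<in> F" "f' \<in> F"
  shows "qo (a \<otimes> f) (a' \<otimes> f') \<longleftrightarrow> (f = \<one> \<and> f' = \<one> \<and> qo a a') \<or> (f' \<noteq> \<one> \<and> qo f f')"
proof -
  have ac: "a \<in> carrier G" "a' \<in> carrier G" using a O_carr by auto
  have fc: "f \<in> carrier G" "f' \<in> carrier G" using f F_carr by auto
  have xc: "a \<otimes> f \<in> carrier G" "a' \<otimes> f' \<in> carrier G" using ac fc by auto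
  show ?thesis
  proof (cases "f' = \<one>")
    case True
    show ?thesis
    proof (cases "f = \<one>")
      case True thus ?thesis using \<open>f' = \<one>\<close> ac by simp
    next
      case False
      have "\<not> qo (a \<otimes> f) a'" using F2[OF a(2) xc(1) prod_notO(1)[OF a(1) f(1) False]] .
      thus ?thesis using True False ac by simp
    qed
  next
    case False
    note y = prod_notO[OF a(2) f(2) False]
    show ?thesis
    proof (cases "f = \<one>")
      case True
      have "\<not> qo (a' \<otimes> f') a" using F2[OF a(1) xc(2) y(1)] .
      hence l: "qo a (a' \<otimes> f')" using total[OF ac(1) xc(2)] by blast
      have "\<not> qo f' \<one>" using F2[OF O_one fc(2) FnotO[OF f(2) False]] .
      hence "qo \<one> f'" using total[OF fc(2)] by blast
      thus ?thesis using l True False ac by simp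
    next
      case fn: False
      note x = prod_notO[OF a(1) f(1) fn]
      have "qo (a \<otimes> f) (a' \<otimes> f') \<longleftrightarrow> qo f f'"
      proof
        assume "qo (a \<otimes> f) (a' \<otimes> f')"
        hence "qo f (a' \<otimes> f')" using trans[OF fc(1) xc(1) xc(2)] x by blast
        thus "qo f f'" using trans[OF fc(1) xc(2) fc(2)] y by blast
      next
        assume "qo f f'"
        hence "qo (a \<otimes> f) f'" using trans[OF xc(1) fc(1) fc(2)] x by blast
        thus "qo (a \<otimes> f) (a' \<otimes> f')" using trans[OF xc(1) fc(2) xc(2)] y by blast
      qed
      thus ?thesis using False by simp
    qed
  qed
qed

lemma part2: "qo_iso ((G\<lparr>carrier := GO\<rparr>) \<times>\<times> (G\<lparr>carrier := F\<rparr>))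
           (compat_prod_le (G\<lparr>carrier := F\<rparr>) qo qo) G qo (\<lambda>(a, f). a \<otimes> f)"
  unfolding qo_iso_def iso_def
proof (intro conjI CollectI ballI)
  show "(\<lambda>(a, f). a \<otimes> f) \<in> hom (G\<lparr>carrier := GO\<rparr> \<times>\<times> G\<lparr>carrier := F\<rparr>) G"
    unfolding hom_def
  proof (intro CollectI conjI ballI Pi_I)
    fix p assume "p \<in> carrier (G\<lparr>carrier := GO\<rparr> \<times>\<times> G\<lparr>carrier := F\<rparr>)"
    thus "(case p of (a, f) \<Rightarrow> a \<otimes> f) \<in> carrier G" using O_carr F_carr by auto
  next
    fix p q assume "p \<in> carrier (G\<lparr>carrier := GO\<rparr> \<times>\<times> G\<lparr>carrier := F\<rparr>)"
      "q \<in> carrier (G\<lparr>carrier := GO\<rparr> \<times>\<times> G\<lparr>carrier := F\<rparr>)"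
    then obtain a f a' f' where p: "p = (a, f)" "q = (a', f')" "a \<in> carrier G" "f \<in> carrier G"
      "a' \<in> carrier G" "f' \<in> carrier G" using O_carr F_carr by auto
    thus "(case p \<otimes>\<^bsub>G\<lparr>carrier := GO\<rparr> \<times>\<times> G\<lparr>carrier := F\<rparr>\<^esub> q of (a, f) \<Rightarrow> a \<otimes> f) =
          (case p of (a, f) \<Rightarrow> a \<otimes> f) \<otimes> (case q of (a, f) \<Rightarrow> a \<otimes> f)"
      by (simp add: m_ac)
  qed
next
  show "bij_betw (\<lambda>(a, f). a \<otimes> f) (carrier (G\<lparr>carrier := GO\<rparr> \<times>\<times> G\<lparr>carrier := F\<rparr>)) (carrier G)"
    unfolding bij_betw_def
  proof
    show "inj_on (\<lambda>(a, f). a \<otimes> f) (carrier (G\<lparr>carrier := GO\<rparr> \<times>\<times> G\<lparr>carrier := F\<rparr>))"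
    proof (rule inj_onI, clarsimp)
      fix a f a' f' assume h: "a \<in> GO" "f \<in> F" "a' \<in> GO" "f' \<in> F" "a \<otimes> f = a' \<otimes> f'"
      have c: "a \<in> carrier G" "f \<in> carrier G" "a' \<in> carrier G" "f' \<in> carrier G"
        using h O_carr F_carr by auto
      have "f \<otimes> inv f' = inv a \<otimes> a'"
      proof -
        have "inv a \<otimes> (a \<otimes> f) \<otimes> inv f' = inv a \<otimes> (a' \<otimes> f') \<otimes> inv f'" using h by simp
        thus ?thesis using c by (simp add: m_assoc[symmetric] ) (simp add: m_assoc)
      qed
      moreover have "inv a \<otimes> a' \<in> GO" using O_mult O_inv h by blast
      ultimately have e: "f = f'" using FO_eq h by simp
      hence "a \<otimes> f \<otimes> inv f = a' \<otimes> f \<otimes> inv f" using h by simp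
      hence "a = a'" using c by (simp add: m_assoc)
      thus "a = a' \<and> f = f'" using e by simp
    qed
  next
    show "(\<lambda>(a, f). a \<otimes> f) ` carrier (G\<lparr>carrier := GO\<rparr> \<times>\<times> G\<lparr>carrier := F\<rparr>) = carrier G"
    proof
      show "(\<lambda>(a, f). a \<otimes> f) ` carrier (G\<lparr>carrier := GO\<rparr> \<times>\<times> G\<lparr>carrier := F\<rparr>) \<subseteq> carrier G"
        using O_carr F_carr by auto
    next
      show "carrier G \<subseteq> (\<lambda>(a, f). a \<otimes> f) ` carrier (G\<lparr>carrier := GO\<rparr> \<times>\<times> G\<lparr>carrier := F\<rparr>)"
      proof
        fix x assume "x \<in> carrier G"
        then obtain a f where "a \<in> GO" "f \<in> F" "x = a \<otimes> f" using decomp by blast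
        thus "x \<in> (\<lambda>(a, f). a \<otimes> f) ` carrier (G\<lparr>carrier := GO\<rparr> \<times>\<times> G\<lparr>carrier := F\<rparr>)"
          by force
      qed
    qed
  qed
next
  fix p q assume "p \<in> carrier (G\<lparr>carrier := GO\<rparr> \<times>\<times> G\<lparr>carrier := F\<rparr>)"
      "q \<in> carrier (G\<lparr>carrier := GO\<rparr> \<times>\<times> G\<lparr>carrier := F\<rparr>)"
  then obtain a f a' f' where p: "p = (a, f)" "q = (a', f')" "a \<in> GO" "f \<in> F"
      "a' \<in> GO" "f' \<in> F" by auto
  thus "compat_prod_le (G\<lparr>carrier := F\<rparr>) qo qo p q =
         qo (case p of (a, f) \<Rightarrow> a \<otimes> f) (case q of (a, f) \<Rightarrow> a \<otimes> f)"
    using part2_order unfolding compat_prod_le_def by simp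
qed

end

end

theorem mainTheorem12:
  fixes G :: "('a, 'b) monoid_scheme" and qo :: "'a \<Rightarrow> 'a \<Rightarrow> bool" and F :: "'a set"
  assumes "cqo_group G qo"
    and "direct_summand_compl G (otype_part G qo) F"
  shows "qo_iso (G\<lparr>carrier := F\<rparr>) qo (G Mod (otype_part G qo)) (valued_le G qo)
           (\<lambda>f. otype_part G qo #>\<^bsub>G\<^esub> f)
         \<and> qo_iso ((G\<lparr>carrier := otype_part G qo\<rparr>) \<times>\<times> (G\<lparr>carrier := F\<rparr>))
           (compat_prod_le (G\<lparr>carrier := F\<rparr>) qo qo) G qo
           (\<lambda>(a, f). a \<otimes>\<^bsub>G\<^esub> f)"
proof -
  have sg: "subgroup (otype_part G qo) G" using assms(2) unfolding direct_summand_compl_def by blast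
  interpret cqoS G qo by (rule cqoS.intro[OF assms(1) sg])
  show ?thesis using part1[OF assms(2)] part2[OF assms(2)] by blast
qed

end
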